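(* Let $G$ and $H$ be symmetric convex $N$-player games. Then for every player $i\in A$, $$R_i(G+H)\ge R_i(G)+R_i(H).$$
   Context: Let $A=\{1,\dots,N\}$ be a finite set of players. A game is any function $G:2^A\to\mathbb{R}$; sums of games are taken pointwise. A game $G$ is symmetric convex if there is a function $g:\{0,1,\dots,N\}\to\mathbb{R}$ with $G(S)=g(|S|)$ for all $S\subseteq A$, such that the increments $g(k+1)-g(k)$ are nonnegative for all $0\le k<N$ and nondecreasing in $k$. For a player $i$ and a coalition $S\subseteq A\setminus\{i\}$, the marginal contribution is $d_iG(S)=G(S\cup\{i\})-G(S)$. Let $f_i$ be a random subset of $A\setminus\{i\}$ with distribution $\Pr\{f_i=S\}=\frac{|S|!\,(N-|S|-1)!}{N!}$ for each $S\subseteq A\setminus\{i\}$. The Shapley uncertainty of $G$ for player $i$ is $R_i(G)=\mathrm{Var}[d_iG(f_i)]$. *)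

theory Defs
  imports Complex_Main
begin

type_synonym game = "nat set \<Rightarrow> real"

definition players :: "nat \<Rightarrow> nat set" where
  "players N = {1..N}"

definition symmetric_convex :: "nat \<Rightarrow> game \<Rightarrow> bool" where
  "symmetric_convex N G \<longleftrightarrow>
     (\<exists>g :: nat \<Rightarrow> real.
        (\<forall>S. S \<subseteq> players N \<longrightarrow> G S = g (card S)) \<and>
        (\<forall>k<N. g (k + 1) - g k \<ge> 0) \<and>
        (\<forall>k. k + 1 < N \<longrightarrow> g (k + 1) - g k \<le> g (k + 2) - g (k + 1)))"

definition marginal :: "game \<Rightarrow> nat \<Rightarrow> nat set \<Rightarrow> real" where
  "marginal G i S = G (insert i S) - G S"

text \<open>Probability that the random coalition f_i equals S (S a subset of A without i).\<close>
definition shapley_prob :: "nat \<Rightarrow> nat set \<Rightarrow> real" where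
  "shapley_prob N S = fact (card S) * fact (N - card S - 1) / fact N"

definition shapley_mean :: "nat \<Rightarrow> game \<Rightarrow> nat \<Rightarrow> real" where
  "shapley_mean N G i =
     (\<Sum>S\<in>Pow (players N - {i}). shapley_prob N S * marginal G i S)"

definition shapley_uncertainty :: "nat \<Rightarrow> game \<Rightarrow> nat \<Rightarrow> real" where
  "shapley_uncertainty N G i =
     (\<Sum>S\<in>Pow (players N - {i}).
        shapley_prob N S * (marginal G i S - shapley_mean N G i)\<^sup>2)"

end

theory Submission
  imports Defs
begin

lemma cheb:
  fixes p X Y :: "'a \<Rightarrow> real"
  assumes fin: "finite I" and p: "\<And>a. a \<in> I \<Longrightarrow> p a \<ge> 0" and W: "(\<Sum>a\<in>I. p a) = 1"
    and co: "\<And>a b. a \<in> I \<Longrightarrow> b \<in> I \<Longrightarrow> (X a - X b) * (Y a - Y b) \<ge> 0"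
  shows "(\<Sum>a\<in>I. p a * (X a + Y a - (\<Sum>b\<in>I. p b * (X b + Y b)))\<^sup>2)
     \<ge> (\<Sum>a\<in>I. p a * (X a - (\<Sum>b\<in>I. p b * X b))\<^sup>2) + (\<Sum>a\<in>I. p a * (Y a - (\<Sum>b\<in>I. p b * Y b))\<^sup>2)"
proof -
  define mx where "mx = (\<Sum>b\<in>I. p b * X b)"
  define my where "my = (\<Sum>b\<in>I. p b * Y b)"
  have m: "(\<Sum>b\<in>I. p b * (X b + Y b)) = mx + my"
    by (simp add: mx_def my_def distrib_left sum.distrib)
  have "0 \<le> (\<Sum>a\<in>I. \<Sum>b\<in>I. p a * p b * ((X a - X b) * (Y a - Y b)))"
    by (intro sum_nonneg mult_nonneg_nonneg p co) auto
  also have "\<dots> = (\<Sum>a\<in>I. \<Sum>b\<in>I. p b * (p a * X a * Y a) + p a * (p b * X b * Y b)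
        - (p a * X a) * (p b * Y b) - (p b * X b) * (p a * Y a))"
    by (intro sum.cong refl) (simp add: algebra_simps)
  also have "\<dots> = 2 * (\<Sum>a\<in>I. p a * X a * Y a) - 2 * mx * my"
  proof -
    have s1: "(\<Sum>a\<in>I. \<Sum>b\<in>I. p b * (p a * X a * Y a)) = (\<Sum>a\<in>I. p a * X a * Y a)"
      by (simp add: sum_distrib_right[symmetric] W)
    have s2: "(\<Sum>a\<in>I. \<Sum>b\<in>I. p a * (p b * X b * Y b)) = (\<Sum>a\<in>I. p a * X a * Y a)"
      by (simp add: sum.swap[of _ I I] sum_distrib_right[symmetric] W)
    have s3: "(\<Sum>a\<in>I. \<Sum>b\<in>I. (p a * X a) * (p b * Y b)) = mx * my"
      by (simp add: mx_def my_def sum_product)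
    have s4: "(\<Sum>a\<in>I. \<Sum>b\<in>I. (p b * X b) * (p a * Y a)) = mx * my"
    proof -
      have "my * mx = (\<Sum>a\<in>I. \<Sum>b\<in>I. (p a * Y a) * (p b * X b))"
        unfolding mx_def my_def by (rule sum_product)
      also have "\<dots> = (\<Sum>a\<in>I. \<Sum>b\<in>I. (p b * X b) * (p a * Y a))"
        by (intro sum.cong refl) (rule mult.commute)
      finally show ?thesis by (simp add: mult.commute)
    qed
    show ?thesis
      by (simp only: sum_subtractf sum.distrib s1 s2 s3 s4)
  qed
  finally have c: "(\<Sum>a\<in>I. p a * X a * Y a) \<ge> mx * my" by simp
  have e: "(\<Sum>a\<in>I. p a * (X a + Y a - (mx + my))\<^sup>2) = (\<Sum>a\<in>I. p a * (X a - mx)\<^sup>2)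
     + (\<Sum>a\<in>I. p a * (Y a - my)\<^sup>2) + 2 * (\<Sum>a\<in>I. p a * (X a - mx) * (Y a - my))"
  proof -
    have "\<And>a. p a * (X a + Y a - (mx + my))\<^sup>2 = p a * (X a - mx)\<^sup>2 + p a * (Y a - my)\<^sup>2 + 2 * (p a * (X a - mx) * (Y a - my))"
      by (simp add: power2_eq_square algebra_simps)
    then show ?thesis by (simp add: sum.distrib sum_distrib_left)
  qed
  have "(\<Sum>a\<in>I. p a * (X a - mx) * (Y a - my)) = (\<Sum>a\<in>I. p a * X a * Y a) - my * mx - mx * my + mx * my * (\<Sum>a\<in>I. p a)"
  proof -
    have "\<And>a. p a * (X a - mx) * (Y a - my) = p a * X a * Y a - my * (p a * X a) - mx * (p a * Y a) + mx * my * p a"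
      by (simp add: algebra_simps)
    then have "(\<Sum>a\<in>I. p a * (X a - mx) * (Y a - my)) = (\<Sum>a\<in>I. p a * X a * Y a) - my * (\<Sum>a\<in>I. p a * X a) - mx * (\<Sum>a\<in>I. p a * Y a) + mx * my * (\<Sum>a\<in>I. p a)"
      by (simp only: sum.distrib sum_subtractf sum_distrib_left)
    then show ?thesis by (simp add: mx_def[symmetric] my_def[symmetric])
  qed
  with c W have "(\<Sum>a\<in>I. p a * (X a - mx) * (Y a - my)) \<ge> 0" by simp
  with e m show ?thesis unfolding mx_def[symmetric] my_def[symmetric] by simp
qed

lemma sum_Pow_card:
  fixes f :: "nat \<Rightarrow> real"
  assumes "finite A"
  shows "(\<Sum>S\<in>Pow A. f (card S)) = (\<Sum>k\<le>card A. real (card A choose k) * f k)"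
proof -
  have "(\<Sum>S\<in>Pow A. f (card S)) = (\<Sum>k\<le>card A. \<Sum>S\<in>{S. S \<in> Pow A \<and> card S = k}. f (card S))"
    by (rule sum.group[symmetric]) (use assms in \<open>auto intro: card_mono\<close>)
  also have "\<dots> = (\<Sum>k\<le>card A. real (card A choose k) * f k)"
  proof (intro sum.cong refl)
    fix k
    have "(\<Sum>S\<in>{S. S \<in> Pow A \<and> card S = k}. f (card S)) = (\<Sum>S\<in>{S. S \<subseteq> A \<and> card S = k}. f k)"
      by (intro sum.cong) auto
    also have "\<dots> = real (card A choose k) * f k"
      using n_subsets[OF assms, of k] by simp
    finally show "(\<Sum>S\<in>{S. S \<in> Pow A \<and> card S = k}. f (card S)) = real (card A choose k) * f k" .
  qed
  finally show ?thesis .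
qed

lemma prob_sum:
  assumes "i \<in> players N"
  shows "(\<Sum>S\<in>Pow (players N - {i}). shapley_prob N S) = 1"
proof -
  define n where "n = N - 1"
  have N: "N = n + 1" using assms by (auto simp: players_def n_def)
  have cA: "card (players N - {i}) = n" using assms by (simp add: players_def n_def)
  have "(\<Sum>S\<in>Pow (players N - {i}). shapley_prob N S)
      = (\<Sum>S\<in>Pow (players N - {i}). (\<lambda>c. fact c * fact (N - c - 1) / fact N) (card S))"
    by (simp add: shapley_prob_def)
  also have "\<dots> = (\<Sum>k\<le>n. real (n choose k) * (fact k * fact (N - k - 1) / fact N))"
    by (subst sum_Pow_card) (simp_all add: cA, simp add: players_def)
  also have "\<dots> = (\<Sum>k\<le>n. 1 / real N)"
  proof (intro sum.cong refl)
    fix k assume "k \<in> {..n}"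
    then have k: "k \<le> n" by simp
    have "real (n choose k) * (fact k * fact (n - k)) = fact n"
      using binomial_fact_lemma[OF k] by (metis (mono_tags, lifting) mult.commute of_nat_fact of_nat_mult)
    moreover have "N - k - 1 = n - k" using N by simp
    moreover have "fact N = real N * fact n" using N by simp
    moreover have "(fact n :: real) > 0" by simp
    ultimately have "real (n choose k) * (fact k * fact (N - k - 1) / fact N) = fact n / (real N * fact n)"
      by (simp add: mult.assoc)
    also have "\<dots> = 1 / real N" using \<open>(fact n :: real) > 0\<close> by simp
    finally show "real (n choose k) * (fact k * fact (N - k - 1) / fact N) = 1 / real N" .
  qed
  also have "\<dots> = 1" using N by simp
  finally show ?thesis .
qed

lemma incr_mono:
  fixes g :: "nat \<Rightarrow> real"
  assumes "\<forall>k. k + 1 < N \<longrightarrow> g (k + 1) - g k \<le> g (k + 2) - g (k + 1)"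
    and "m \<le> n" and "n < N"
  shows "g (m + 1) - g m \<le> g (n + 1) - g n"
  using assms(2,3)
proof (induction n)
  case 0 then show ?case by simp
next
  case (Suc n)
  show ?case
  proof (cases "m = Suc n")
    case False
    then have "g (m + 1) - g m \<le> g (n + 1) - g n" using Suc by simp
    also have "\<dots> \<le> g (n + 2) - g (n + 1)" using assms(1) Suc.prems by auto
    finally show ?thesis by (simp add: numeral_2_eq_2)
  qed simp
qed

lemma marg_rep:
  assumes "symmetric_convex N G" and "i \<in> players N"
  obtains d :: "nat \<Rightarrow> real" where
    "\<And>S. S \<in> Pow (players N - {i}) \<Longrightarrow> marginal G i S = d (card S) \<and> card S < N"
    "\<And>m n. m \<le> n \<Longrightarrow> n < N \<Longrightarrow> d m \<le> d n"
proof -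
  obtain g where g1: "\<forall>S. S \<subseteq> players N \<longrightarrow> G S = g (card S)"
    and g3: "\<forall>k. k + 1 < N \<longrightarrow> g (k + 1) - g k \<le> g (k + 2) - g (k + 1)"
    using assms(1) unfolding symmetric_convex_def by blast
  show ?thesis
  proof (rule that[of "\<lambda>k. g (k + 1) - g k"])
    fix S assume S: "S \<in> Pow (players N - {i})"
    have fin: "finite S" using S by (auto simp: players_def intro: finite_subset)
    have "card S \<le> card (players N - {i})" using S by (intro card_mono) (auto simp: players_def)
    also have "\<dots> < N" using assms(2) by (simp add: players_def)
    finally have lt: "card S < N" .
    have "i \<notin> S" using S by auto
    then have ci: "card (insert i S) = card S + 1" using fin by simp
    have "G (insert i S) = g (card (insert i S))" "G S = g (card S)"
    proof -
      have "insert i S \<subseteq> players N" "S \<subseteq> players N" using S assms(2) by auto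
      then show "G (insert i S) = g (card (insert i S))" "G S = g (card S)" using g1 by auto
    qed
    then show "marginal G i S = g (card S + 1) - g (card S) \<and> card S < N"
      using ci lt by (simp add: marginal_def)
  next
    fix m n :: nat assume "m \<le> n" "n < N"
    then show "g (m + 1) - g m \<le> g (n + 1) - g n" using incr_mono[OF g3] by blast
  qed
qed

theorem mainTheorem8:
  fixes N :: nat and G H :: game and i :: nat
  assumes "symmetric_convex N G" and "symmetric_convex N H"
    and "i \<in> players N"
  shows "shapley_uncertainty N (\<lambda>S. G S + H S) i
           \<ge> shapley_uncertainty N G i + shapley_uncertainty N H i"
proof -
  obtain dg where dg1: "\<And>S. S \<in> Pow (players N - {i}) \<Longrightarrow> marginal G i S = dg (card S) \<and> card S < N"
    and dg2: "\<And>m n. m \<le> n \<Longrightarrow> n < N \<Longrightarrow> dg m \<le> dg n"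
    using marg_rep[OF assms(1,3)] by blast
  obtain dh where dh1: "\<And>S. S \<in> Pow (players N - {i}) \<Longrightarrow> marginal H i S = dh (card S) \<and> card S < N"
    and dh2: "\<And>m n. m \<le> n \<Longrightarrow> n < N \<Longrightarrow> dh m \<le> dh n"
    using marg_rep[OF assms(2,3)] by blast
  have fin: "finite (Pow (players N - {i}))" by (simp add: players_def)
  have p: "\<And>S. S \<in> Pow (players N - {i}) \<Longrightarrow> shapley_prob N S \<ge> 0"
    by (simp add: shapley_prob_def)
  have co: "(marginal G i a - marginal G i b) * (marginal H i a - marginal H i b) \<ge> 0"
    if a: "a \<in> Pow (players N - {i})" and b: "b \<in> Pow (players N - {i})" for a b
  proof (cases "card a \<le> card b")
    case True
    then have "dg (card a) \<le> dg (card b)" "dh (card a) \<le> dh (card b)"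
      using dg1[OF b] dh1[OF b] by (auto intro: dg2 dh2)
    then show ?thesis using dg1[OF a] dg1[OF b] dh1[OF a] dh1[OF b]
      by (simp add: mult_nonpos_nonpos)
  next
    case False
    then have "dg (card b) \<le> dg (card a)" "dh (card b) \<le> dh (card a)"
      using dg1[OF a] dh1[OF a] by (auto intro: dg2 dh2)
    then show ?thesis using dg1[OF a] dg1[OF b] dh1[OF a] dh1[OF b]
      by simp
  qed
  have madd: "marginal (\<lambda>S. G S + H S) i S = marginal G i S + marginal H i S" for S
    by (simp add: marginal_def)
  show ?thesis
    unfolding shapley_uncertainty_def shapley_mean_def madd
    by (rule cheb[OF fin p prob_sum[OF assms(3)] co])
qed

end
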